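(* Let $\bm G\in\{0,1\}^{n\times k}$ be a partition indicator matrix, $\bm\Omega\in[0,1]^{k\times k}$ symmetric, $\bm{\mathcal A}=\bm G\bm\Omega\bm G^\top$ of rank $k$ with all entries of $\bm{\mathcal A}\bm1$ positive, and $\bm{\mathcal L}=\operatorname{diag}(\bm{\mathcal A}\bm1)^{-1/2}\bm{\mathcal A}\operatorname{diag}(\bm{\mathcal A}\bm1)^{-1/2}$. Let $\bm v_1,\ldots,\bm v_k$ be orthonormal eigenvectors of $\bm{\mathcal L}$ corresponding to its $k$ nonzero eigenvalues. Then each column of $\bm G$ is a linear combination of $\bm v_1,\ldots,\bm v_k$.
   Context: A partition indicator matrix $\bm G$ has exactly one entry $1$ in each row and each column nonzero. $\bm1$ is the all-ones vector and $\operatorname{diag}(\bm x)$ the diagonal matrix with diagonal $\bm x$. *)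

theory Defs
  imports "HOL-Analysis.Analysis"
begin

definition partition_indicator :: "real^'k^'n \<Rightarrow> bool" where
  "partition_indicator G \<longleftrightarrow>
     (\<forall>i j. G $ i $ j = 0 \<or> G $ i $ j = 1) \<and>
     (\<forall>i. \<exists>!j. G $ i $ j = 1) \<and>
     (\<forall>j. \<exists>i. G $ i $ j \<noteq> 0)"

definition diag_mat :: "real^'n \<Rightarrow> real^'n^'n" where
  "diag_mat x = (\<chi> i j. if i = j then x $ i else 0)"

text \<open>Entrywise inverse square root of a vector, so diag(x)^(-1/2) = diag_mat (inv_sqrt_vec x)
  for x with positive entries.\<close>
definition inv_sqrt_vec :: "real^'n \<Rightarrow> real^'n" where
  "inv_sqrt_vec x = (\<chi> i. 1 / sqrt (x $ i))"

end

theory Submission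
  imports Defs
begin

lemma ifmul: "(if P then (1::real) else 0) * x = (if P then x else 0)" "x * (if P then (1::real) else 0) = (if P then x else 0)" by auto

lemma ifmul2: "(if P then (a::real) else 0) * x = (if P then a * x else 0)" "x * (if P then (a::real) else 0) = (if P then x * a else 0)" by auto

theorem corollaryA3:
  fixes G :: "real^'k^'n" and \<Omega> :: "real^'k^'k"
    and v :: "'k \<Rightarrow> real^'n" and lam :: "'k \<Rightarrow> real"
  assumes G: "partition_indicator G"
    and \<Omega>_sym: "transpose \<Omega> = \<Omega>"
    and \<Omega>_range: "\<And>a b. 0 \<le> \<Omega> $ a $ b \<and> \<Omega> $ a $ b \<le> 1"
    and rank: "rank (G ** \<Omega> ** transpose G) = CARD('k)"
    and deg_pos: "\<And>i. ((G ** \<Omega> ** transpose G) *v 1) $ i > 0"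
    and orthonormal: "\<And>a b. v a \<bullet> v b = (if a = b then 1 else 0)"
    and eigen: "\<And>a. (diag_mat (inv_sqrt_vec ((G ** \<Omega> ** transpose G) *v 1))
                      ** (G ** \<Omega> ** transpose G)
                      ** diag_mat (inv_sqrt_vec ((G ** \<Omega> ** transpose G) *v 1))) *v v a
                    = lam a *\<^sub>R v a"
    and nonzero: "\<And>a. lam a \<noteq> 0"
  shows "\<forall>j. column j G \<in> span (range v)"
proof -
  define z where "z i = (THE j. G $ i $ j = 1)" for i
  have Gz: "G $ i $ j = (if j = z i then 1 else 0)" for i j
  proof -
    have u: "\<exists>!j. G $ i $ j = 1" using G unfolding partition_indicator_def by blast
    have "G $ i $ z i = 1" unfolding z_def using theI'[OF u] .
    moreover have "j \<noteq> z i \<Longrightarrow> G $ i $ j = 0"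
      using u G \<open>G $ i $ z i = 1\<close> unfolding partition_indicator_def by metis
    ultimately show ?thesis by auto
  qed
  define A where "A = G ** \<Omega> ** transpose G"
  have GO: "(G ** \<Omega>) $ i $ b = \<Omega> $ z i $ b" for i b
    by (simp add: matrix_matrix_mult_def Gz ifmul)
  have Aent: "A $ i $ l = \<Omega> $ z i $ z l" for i l
    by (simp add: A_def matrix_matrix_mult_def GO transpose_def Gz ifmul)
  define e where "e j = (\<Sum>l\<in>UNIV. \<Omega> $ j $ z l)" for j
  define w where "w = inv_sqrt_vec (A *v 1)"
  have w: "w $ i = 1 / sqrt (e (z i))" for i
    by (simp add: w_def inv_sqrt_vec_def matrix_vector_mult_def Aent e_def)
  define M where "M = diag_mat w ** A ** diag_mat w"
  have Ment: "M $ i $ l = w $ i * A $ i $ l * w $ l" for i l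
    by (simp add: M_def matrix_matrix_mult_def diag_mat_def ifmul2)
  define S where "S = span (range (\<lambda>j. column j G))"
  have MS: "M *v x \<in> S" for x
  proof -
    define g where "g j = 1 / sqrt (e j) * (\<Sum>l\<in>UNIV. \<Omega> $ j $ z l * w $ l * x $ l)" for j
    have "M *v x = (\<Sum>j\<in>UNIV. g j *\<^sub>R column j G)"
    proof (rule vec_eq_iff[THEN iffD2], rule allI)
      fix i
      have "(M *v x) $ i = g (z i)"
        by (simp add: matrix_vector_mult_def Ment Aent w g_def sum_distrib_left mult.assoc)
      moreover have "(\<Sum>j\<in>UNIV. g j *\<^sub>R column j G) $ i = g (z i)"
        by (simp add: column_def Gz ifmul)
      ultimately show "(M *v x) $ i = (\<Sum>j\<in>UNIV. g j *\<^sub>R column j G) $ i" by simp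
    qed
    also have "\<dots> \<in> S" unfolding S_def
      by (intro span_sum span_mul span_base) auto
    finally show ?thesis .
  qed
  have vS: "v a \<in> S" for a
  proof -
    have "v a = (1 / lam a) *\<^sub>R (M *v v a)"
      using eigen[of a] nonzero[of a] by (simp add: M_def A_def w_def)
    then show ?thesis using MS[of "v a"] unfolding S_def by (metis span_mul scaleR_conv_of_real)
  qed
  have sub: "span (range v) \<subseteq> S"
    unfolding S_def by (rule span_minimal) (use vS S_def in auto)
  have injv: "inj v"
  proof
    fix a b assume "v a = v b"
    then have "v a \<bullet> v b = 1" using orthonormal[of b b] by simp
    then show "a = b" using orthonormal[of a b] by (auto split: if_splits)
  qed
  have indep: "independent (range v)"
  proof (rule pairwise_orthogonal_independent)
    show "pairwise orthogonal (range v)"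
      unfolding pairwise_def orthogonal_def using orthonormal by auto
    show "0 \<notin> range v" using orthonormal by (metis (full_types) image_iff inner_zero_left zero_neq_one)
  qed
  have d1: "dim (span (range v)) = CARD('k)"
    using dim_span_eq_card_independent[OF indep] card_image[OF injv] by simp
  have d2: "dim S \<le> CARD('k)"
  proof -
    have "dim S \<le> card (range (\<lambda>j. column j G))"
      unfolding S_def by (rule dim_le_card) auto
    also have "\<dots> \<le> CARD('k)" by (rule card_image_le) simp
    finally show ?thesis .
  qed
  have eq: "span (range v) = S"
    by (rule subspace_dim_equal) (use sub d1 d2 S_def in auto)
  show ?thesis unfolding eq S_def by (auto intro: span_base)
qed

end
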